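(* For every $n\ge1$, every greedy-from-the-bottom (GFB) tree $T$ with $n$ leaves satisfies $\mathcal{C}(T)=c_n$.
   Context: Bifurcating trees: rooted trees in which every internal node has exactly two children, considered up to isomorphism; $\mathcal{T}_n$ is the set of such trees with $n$ leaves. For a node $w$, $\kappa_T(w)$ is its number of descendant leaves. The Colless index is $\mathcal{C}(T)=\sum_{v}|\kappa_T(v_1)-\kappa_T(v_2)|$, summed over internal nodes $v$ with children $v_1,v_2$; $c_n=\min\{\mathcal{C}(T):T\in\mathcal{T}_n\}$. GFB trees: start with a multiset of $n$ single-node trees; while the multiset has more than one tree, remove a tree $u$ with the minimum number of leaves, then remove a tree $v$ with the minimum number of leaves among the remaining trees, and insert the tree consisting of a new root whose two children are the roots of $u$ and $v$. Any tree that can be the final remaining tree of this procedure is a GFB tree with $n$ leaves. *)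

theory Defs
  imports Main "HOL-Library.Multiset"
begin

text \<open>Rooted bifurcating trees (ordered representatives; Colless index and leaf
counts are invariant under swapping children, so isomorphism classes need not be
formed explicitly).\<close>
datatype btree = Leaf | Node btree btree

fun leaves :: "btree \<Rightarrow> nat" where
  "leaves Leaf = 1"
| "leaves (Node l r) = leaves l + leaves r"

fun colless :: "btree \<Rightarrow> nat" where
  "colless Leaf = 0"
| "colless (Node l r) = colless l + colless r + nat \<bar>int (leaves l) - int (leaves r)\<bar>"

definition min_colless :: "nat \<Rightarrow> nat" where
  "min_colless n = Min {colless t | t. leaves t = n}"

inductive gfb_step :: "btree multiset \<Rightarrow> btree multiset \<Rightarrow> bool" where
  "\<lbrakk> u \<in># M; \<forall>w\<in>#M. leaves u \<le> leaves w;
     v \<in># M - {#u#}; \<forall>w\<in>#M - {#u#}. leaves v \<le> leaves w \<rbrakk>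
   \<Longrightarrow> gfb_step M (add_mset (Node u v) (M - {#u#} - {#v#}))"

definition is_GFB :: "nat \<Rightarrow> btree \<Rightarrow> bool" where
  "is_GFB n T \<longleftrightarrow> gfb_step\<^sup>*\<^sup>* (replicate_mset n Leaf) {#T#}"

end

theory Submission
  imports Defs
begin

fun f :: "nat \<Rightarrow> nat" where
  "f n = (if n \<le> 1 then 0 else f (n div 2) + f ((n+1) div 2) + n mod 2)"

declare f.simps[simp del]

lemma f_0[simp]: "f 0 = 0" by (simp add: f.simps)
lemma f_1[simp]: "f (Suc 0) = 0" by (simp add: f.simps)
lemma f_even: "f (2*k) = 2 * f k"
proof (cases "k = 0")
  case False
  then show ?thesis by (subst f.simps) simp
qed simp
lemma f_odd: "k \<ge> 1 \<Longrightarrow> f (2*k+1) = f k + f (k+1) + 1"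
  by (subst f.simps) simp
lemma f_pow: "f (2^i) = 0"
  by (induction i) (auto simp: f_even)
lemma f_2[simp]: "f 2 = 0" using f_pow[of 1] by simp
lemma f_2s[simp]: "f (Suc (Suc 0)) = 0" using f_2 by (simp add: numeral_2_eq_2)
lemma f_3[simp]: "f 3 = 1" by (subst f.simps) simp

lemma f_3s[simp]: "f (Suc (Suc (Suc 0))) = 1" using f_3 by (simp add: numeral_3_eq_3)

lemma abs_split_aux: "(p::int) \<ge> 1 \<Longrightarrow> \<bar>2*y+1 - 2*p\<bar> = \<bar>y - p\<bar> + \<bar>y+1-p\<bar>"
  by arith

lemma f_merge:
  "2^i \<le> 2*x \<Longrightarrow> x \<le> 2^(i+1) \<Longrightarrow> int (f (x + 2^i)) = int (f x) + \<bar>int x - 2^i\<bar>"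
proof (induction i arbitrary: x)
  case 0
  then have "x = 1 \<or> x = 2" by auto
  then show ?case by (elim disjE) simp_all
next
  case (Suc i)
  obtain y where "x = 2*y \<or> x = 2*y+1" by (metis oddE evenE)
  then show ?case
  proof
    assume x: "x = 2*y"
    have "2^i \<le> 2*y" "y \<le> 2^(i+1)" using Suc.prems x by auto
    from Suc.IH[OF this] have "int (f (y + 2^i)) = int (f y) + \<bar>int y - 2^i\<bar>" .
    moreover have "x + 2^Suc i = 2*(y+2^i)" using x by simp
    then have "f (x + 2^Suc i) = 2 * f (y+2^i)" using f_even[of "y+2^i"] by simp
    moreover have "\<bar>int x - 2^Suc i\<bar> = 2 * \<bar>int y - 2^i\<bar>" 
    proof -
      have "\<bar>2*int y - 2*2^i\<bar> = 2*\<bar>int y - (2::int)^i\<bar>" by arith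
      then show ?thesis using x by simp
    qed
    ultimately show ?thesis using x f_even[of y] by simp
  next
    assume x: "x = 2*y+1"
    show ?thesis
    proof (cases "y = 0")
      case True
      then have "2*2^i \<le> (2::nat)" using Suc.prems x by simp
      then have "2^i \<le> (1::nat)" by simp
      then have "i = 0" by (metis one_less_numeral_iff power_0 power_le_imp_le_exp semiring_norm(76) le_zero_eq)
      then show ?thesis using x True by simp
    next
      case False
      have p1: "(1::nat) \<le> 2^i" by simp
      have a: "2^i \<le> 2*y"
      proof (cases i)
        case 0 then show ?thesis using False by simp
      next
        case (Suc j)
        have "2*(2*2^j) \<le> 2*(2*y+1)" using Suc.prems x Suc by simp
        then have "2*2^j \<le> 2*y+1" by simp
        then have "2^j \<le> y" by presburger
        then show ?thesis using Suc by simp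
      qed
      have b: "y \<le> 2^(i+1)" "y + 1 \<le> 2^(i+1)" "2^i \<le> 2*(y+1)"
        using Suc.prems x a p1 by auto
      have IH1: "int (f (y + 2^i)) = int (f y) + \<bar>int y - 2^i\<bar>" using Suc.IH a b by blast
      have IH2: "int (f ((y+1) + 2^i)) = int (f (y+1)) + \<bar>int (y+1) - 2^i\<bar>" using Suc.IH b by blast
      have e1: "x + 2^Suc i = 2*(y+2^i) + 1" using x by simp
      have e2: "f (2*(y+2^i) + 1) = f (y+2^i) + f (y+2^i+1) + 1" by (rule f_odd) (use False in simp)
      have e3: "f x = f y + f (y+1) + 1" using x False f_odd[of y] by simp
      have e4: "\<bar>int x - 2^Suc i\<bar> = \<bar>int y - 2^i\<bar> + \<bar>int (y+1) - 2^i\<bar>"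
        using x abs_split_aux[of "2^i" "int y"] by simp
      show ?thesis using e1 e2 e3 e4 IH1 IH2 by (simp add: add.commute add.left_commute)
    qed
  qed
qed

lemma f_lb_aux:
  "\<forall>a b. a + b = s \<longrightarrow> int (f (a+b)) \<le> int (f a) + int (f b) + \<bar>int a - int b\<bar>"
proof (induction s rule: less_induct)
  case (less s)
  have IH: "\<And>a b. a + b < s \<Longrightarrow> int (f (a+b)) \<le> int (f a) + int (f b) + \<bar>int a - int b\<bar>"
    using less by blast
  have main: "int (f (a+b)) \<le> int (f a) + int (f b) + \<bar>int a - int b\<bar>"
    if s: "a + b = s" and ba: "b \<le> a" for a b
  proof -
    consider "b = 0" | "b = 1" | "b \<ge> 2" by linarith
    then show ?thesis
    proof cases
      case 1 then show ?thesis by simp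
    next
      case 2
      show ?thesis
      proof (cases "a = 1")
        case True then show ?thesis using 2 by simp
      next
        case False
        then have a2: "a \<ge> 2" using ba 2 by simp
        obtain x where "a = 2*x \<or> a = 2*x+1" by (metis oddE evenE)
        then show ?thesis
        proof
          assume a: "a = 2*x"
          then have x1: "x \<ge> 1" using a2 by simp
          have ih: "int (f (x+1)) \<le> int (f x) + int (f 1) + \<bar>int x - int 1\<bar>"
            using IH[of x 1] s a 2 x1 by simp
          have e1: "f (a+b) = f x + f (x+1) + 1" using a 2 f_odd[OF x1] by simp
          have e2: "f a = 2 * f x" using a f_even by simp
          show ?thesis using e1 e2 ih 2 a x1 by simp
        next
          assume a: "a = 2*x+1"
          then have x1: "x \<ge> 1" using a2 by simp
          have ih: "int (f (x+1)) \<le> int (f x) + int (f 1) + \<bar>int x - int 1\<bar>"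
            using IH[of x 1] s a 2 x1 by simp
          have e1: "f (a+b) = 2 * f (x+1)" using a 2 f_even[of "x+1"] by (simp add: algebra_simps)
          have e2: "f a = f x + f (x+1) + 1" using a f_odd[OF x1] by simp
          show ?thesis using e1 e2 ih 2 a x1 by simp
        qed
      qed
    next
      case 3
      obtain x where xa: "a = 2*x \<or> a = 2*x+1" by (metis oddE evenE)
      obtain y where yb: "b = 2*y \<or> b = 2*y+1" by (metis oddE evenE)
      have y1: "y \<ge> 1" using yb 3 by auto
      have x1: "x \<ge> 1" using xa 3 ba by auto
      from xa show ?thesis
      proof
        assume a: "a = 2*x"
        from yb show ?thesis
        proof
          assume b: "b = 2*y"
          have ih: "int (f (x+y)) \<le> int (f x) + int (f y) + \<bar>int x - int y\<bar>"
            using IH[of x y] s a b x1 y1 by simp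
          have e1: "f (a+b) = 2 * f (x+y)" using a b f_even[of "x+y"] by (simp add: algebra_simps)
          have e2: "\<bar>int a - int b\<bar> = 2 * \<bar>int x - int y\<bar>" using a b by (simp; arith)
          show ?thesis using e1 e2 ih a b f_even[of x] f_even[of y] by simp
        next
          assume b: "b = 2*y+1"
          have ih1: "int (f (x+y)) \<le> int (f x) + int (f y) + \<bar>int x - int y\<bar>"
            using IH[of x y] s a b x1 y1 by simp
          have ih2: "int (f (x+(y+1))) \<le> int (f x) + int (f (y+1)) + \<bar>int x - int (y+1)\<bar>"
            using IH[of x "y+1"] s a b x1 y1 by simp
          have e1: "f (a+b) = f (x+y) + f (x+y+1) + 1" using a b f_odd[of "x+y"] x1 by (simp add: algebra_simps)
          have e2: "\<bar>int a - int b\<bar> = \<bar>int x - int y\<bar> + \<bar>int x - int (y+1)\<bar>" using a b by (simp; arith)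
          have e3: "f b = f y + f (y+1) + 1" using b f_odd[OF y1] by simp
          show ?thesis using e1 e2 e3 ih1 ih2 a f_even[of x] by (simp add: add.assoc)
        qed
      next
        assume a: "a = 2*x+1"
        from yb show ?thesis
        proof
          assume b: "b = 2*y"
          have ih1: "int (f (x+y)) \<le> int (f x) + int (f y) + \<bar>int x - int y\<bar>"
            using IH[of x y] s a b x1 y1 by simp
          have ih2: "int (f ((x+1)+y)) \<le> int (f (x+1)) + int (f y) + \<bar>int (x+1) - int y\<bar>"
            using IH[of "x+1" y] s a b x1 y1 by simp
          have e1: "f (a+b) = f (x+y) + f (x+y+1) + 1" using a b f_odd[of "x+y"] x1 by (simp add: algebra_simps)
          have e2: "\<bar>int a - int b\<bar> = \<bar>int x - int y\<bar> + \<bar>int (x+1) - int y\<bar>" using a b by (simp; arith)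
          have e3: "f a = f x + f (x+1) + 1" using a f_odd[OF x1] by simp
          show ?thesis using e1 e2 e3 ih1 ih2 b f_even[of y] by (simp add: add.assoc add.commute add.left_commute)
        next
          assume b: "b = 2*y+1"
          have ih1: "int (f (x+(y+1))) \<le> int (f x) + int (f (y+1)) + \<bar>int x - int (y+1)\<bar>"
            using IH[of x "y+1"] s a b x1 y1 by simp
          have ih2: "int (f ((x+1)+y)) \<le> int (f (x+1)) + int (f y) + \<bar>int (x+1) - int y\<bar>"
            using IH[of "x+1" y] s a b x1 y1 by simp
          have e1: "f (a+b) = 2 * f (x+y+1)" using a b f_even[of "x+y+1"] by (simp add: algebra_simps)
          have e2: "\<bar>int x - int (y+1)\<bar> + \<bar>int (x+1) - int y\<bar> \<le> 2 + \<bar>int a - int b\<bar>" using a b by (simp; arith)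
          have e3: "f a = f x + f (x+1) + 1" using a f_odd[OF x1] by simp
          have e4: "f b = f y + f (y+1) + 1" using b f_odd[OF y1] by simp
          have e5: "x + (y+1) = x+y+1" "(x+1)+y = x+y+1" by simp_all
          show ?thesis using e1 e2 e3 e4 ih1 ih2 unfolding e5 by simp
        qed
      qed
    qed
  qed
  show ?case
  proof (intro allI impI)
    fix a b assume "a + b = s"
    show "int (f (a+b)) \<le> int (f a) + int (f b) + \<bar>int a - int b\<bar>"
    proof (cases "b \<le> a")
      case True then show ?thesis using main \<open>a+b=s\<close> by blast
    next
      case False
      have "int (f (b+a)) \<le> int (f b) + int (f a) + \<bar>int b - int a\<bar>"
        using main[of b a] False \<open>a+b=s\<close> by simp
      then show ?thesis by (simp add: add.commute abs_minus_commute)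
    qed
  qed
qed

lemma f_lb: "int (f (a+b)) \<le> int (f a) + int (f b) + \<bar>int a - int b\<bar>"
  using f_lb_aux by blast

lemma leaves_pos: "leaves t \<ge> 1"
  by (induction t) auto

lemma colless_lb: "f (leaves t) \<le> colless t"
proof (induction t)
  case Leaf then show ?case by simp
next
  case (Node l r)
  have "int (f (leaves l + leaves r)) \<le> int (f (leaves l)) + int (f (leaves r)) + \<bar>int (leaves l) - int (leaves r)\<bar>"
    by (rule f_lb)
  then show ?case using Node by simp
qed

lemma colless_ub: "colless t \<le> leaves t * leaves t"
proof (induction t)
  case Leaf then show ?case by simp
next
  case (Node l r)
  define a where "a = leaves l"
  define b where "b = leaves r"
  have a1: "a \<ge> 1" "b \<ge> 1" using leaves_pos a_def b_def by auto
  have "a \<le> a * b" "b \<le> a * b" using a1 by simp_all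
  then have d: "nat \<bar>int a - int b\<bar> \<le> 2 * (a*b)" by linarith
  have "(a+b)*(a+b) = a*a + b*b + 2*(a*b)" by (simp add: algebra_simps)
  moreover have "colless (Node l r) = colless l + colless r + nat \<bar>int a - int b\<bar>" "leaves (Node l r) = a + b"
    by (simp_all add: a_def b_def)
  ultimately show ?case using Node d a_def b_def by simp
qed

definition pow2 :: "nat \<Rightarrow> bool" where "pow2 x \<longleftrightarrow> (\<exists>i. x = 2^i)"

definition Inv :: "nat \<Rightarrow> btree multiset \<Rightarrow> bool" where
  "Inv n M \<longleftrightarrow> sum_mset (image_mset leaves M) = n \<and> (\<forall>t\<in>#M. colless t = f (leaves t))
     \<and> (\<forall>x\<in>#M. \<forall>y\<in>#M. leaves x \<le> 2 * leaves y)
     \<and> size (filter_mset (\<lambda>t. \<not> pow2 (leaves t)) M) \<le> 1"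

lemma Inv_init: "Inv n (replicate_mset n Leaf)"
proof -
  have "pow2 1" unfolding pow2_def by (rule exI[of _ 0]) simp
  then have "filter_mset (\<lambda>t. \<not> pow2 (leaves t)) (replicate_mset n Leaf) = {#}" by simp
  note F = this
  show ?thesis using \<open>pow2 1\<close> unfolding Inv_def F by (auto simp: sum_mset_replicate_mset)
qed

lemma merge_colless:
  assumes "a \<le> b" "b \<le> 2*a" "pow2 a \<or> pow2 b"
  shows "f (a+b) = f a + f b + nat \<bar>int a - int b\<bar>"
proof -
  from assms(3) show ?thesis
  proof
    assume "pow2 a"
    then obtain i where a: "a = 2^i" unfolding pow2_def by blast
    have "int (f (b + 2^i)) = int (f b) + \<bar>int b - 2^i\<bar>"
      by (rule f_merge) (use assms a in auto)
    then show ?thesis using a f_pow[of i] by (simp add: add.commute abs_minus_commute)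
  next
    assume "pow2 b"
    then obtain i where b: "b = 2^i" unfolding pow2_def by blast
    have "int (f (a + 2^i)) = int (f a) + \<bar>int a - 2^i\<bar>"
      by (rule f_merge) (use assms b in auto)
    then show ?thesis using b f_pow[of i] by simp
  qed
qed

lemma pow2_between:
  assumes "pow2 a" "pow2 b" "a \<le> b" "b \<le> 2*a"
  shows "b = a \<or> b = 2*a"
proof -
  obtain i j where a: "a = 2^i" and b: "b = 2^j" using assms unfolding pow2_def by blast
  have "i \<le> j" using assms(3) a b by simp
  moreover have "j \<le> Suc i" using assms(4) a b
    by (metis power_Suc power_increasing_iff one_less_numeral_iff semiring_norm(76))
  ultimately have "j = i \<or> j = Suc i" by linarith
  then show ?thesis using a b by auto
qed

lemma inv_merge:
  assumes I: "Inv n (add_mset u (add_mset v R))"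
    and hu: "\<forall>w\<in>#R. leaves u \<le> leaves w" and uv: "leaves u \<le> leaves v"
    and hv: "\<forall>w\<in>#R. leaves v \<le> leaves w"
  shows "Inv n (add_mset (Node u v) R)"
proof -
  let ?P = "\<lambda>t. \<not> pow2 (leaves t)"
  define a where "a = leaves u"
  define b where "b = leaves v"
  have S: "leaves u + (leaves v + sum_mset (image_mset leaves R)) = n"
    and C: "\<forall>t\<in>#add_mset u (add_mset v R). colless t = f (leaves t)"
    and D: "\<forall>x\<in>#add_mset u (add_mset v R). \<forall>y\<in>#add_mset u (add_mset v R). leaves x \<le> 2 * leaves y"
    and F: "size (filter_mset ?P (add_mset u (add_mset v R))) \<le> 1"
    using I unfolding Inv_def by auto
  have ab: "a \<le> b" using uv a_def b_def by simp
  have ba: "b \<le> 2*a" using D a_def b_def by simp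
  have Rb: "\<forall>w\<in>#R. leaves w \<le> 2*a" using D a_def by simp
  have h1: "filter_mset ?P R = {#} \<and> pow2 b" if "\<not> pow2 a"
    using F that a_def b_def by (auto split: if_splits)
  have h2: "filter_mset ?P R = {#} \<and> pow2 a" if "\<not> pow2 b"
    using F that a_def b_def by (auto split: if_splits)
  have "filter_mset ?P R \<subseteq># filter_mset ?P (add_mset u (add_mset v R))"
    by (rule multiset_filter_mono) auto
  then have FR: "size (filter_mset ?P R) \<le> 1" using F size_mset_mono order_trans by blast
  have pab: "pow2 a \<or> pow2 b" using h1 by blast
  have cN: "colless (Node u v) = f (leaves (Node u v))"
    using C merge_colless[OF ab ba pab] a_def b_def by simp
  have newF: "filter_mset ?P R = {#}" if "\<not> pow2 (a+b)"
  proof (cases "pow2 a \<and> pow2 b")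
    case False then show ?thesis using h1 h2 by blast
  next
    case True
    then have "b = a \<or> b = 2*a" using pow2_between ab ba by blast
    then show ?thesis
    proof
      assume "b = a"
      obtain i where "a = 2^i" using True unfolding pow2_def by auto
      then have "a + b = 2^(Suc i)" using \<open>b = a\<close> by simp
      then show ?thesis using that unfolding pow2_def by blast
    next
      assume b2: "b = 2*a"
      have "\<forall>w\<in>#R. leaves w = b" using hv Rb b_def b2 by fastforce
      then show ?thesis using True by simp
    qed
  qed
  show ?thesis unfolding Inv_def
  proof (intro conjI)
    show "sum_mset (image_mset leaves (add_mset (Node u v) R)) = n" using S by simp
    show "\<forall>t\<in>#add_mset (Node u v) R. colless t = f (leaves t)" using C cN by simp
    show "\<forall>x\<in>#add_mset (Node u v) R. \<forall>y\<in>#add_mset (Node u v) R. leaves x \<le> 2 * leaves y"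
      using D hu hv Rb a_def by fastforce
    show "size (filter_mset ?P (add_mset (Node u v) R)) \<le> 1"
      using newF FR a_def b_def by auto
  qed
qed

lemma inv_step:
  assumes "gfb_step M M'" "Inv n M"
  shows "Inv n M'"
  using assms(1)
proof cases
  case (1 u v)
  define R where "R = M - {#u#} - {#v#}"
  have vM: "v \<in># M - {#u#}" and uM: "u \<in># M" using 1 by simp_all
  have M1: "M - {#u#} = add_mset v R" unfolding R_def using insert_DiffM[OF vM] by simp
  have M2: "M = add_mset u (add_mset v R)" using insert_DiffM[OF uM] M1 by simp
  have M': "M' = add_mset (Node u v) R" using 1 R_def by simp
  show ?thesis unfolding M'
  proof (rule inv_merge)
    show "Inv n (add_mset u (add_mset v R))" using assms(2) M2 by simp
    show "\<forall>w\<in>#R. leaves u \<le> leaves w" using 1 M2 by simp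
    show "leaves u \<le> leaves v" using 1 M2 by simp
    show "\<forall>w\<in>#R. leaves v \<le> leaves w" using 1 M1 by simp
  qed
qed

lemma inv_reach:
  assumes "gfb_step\<^sup>*\<^sup>* M M'" "Inv n M"
  shows "Inv n M'"
  using assms by (induction rule: rtranclp_induct) (auto intro: inv_step)

theorem proposition6:
  fixes n :: nat and T :: btree
  assumes "n \<ge> 1" and "is_GFB n T"
  shows "colless T = min_colless n"
proof -
  have "Inv n {#T#}" using inv_reach[OF assms(2)[unfolded is_GFB_def] Inv_init] .
  then have LT: "leaves T = n" and CT: "colless T = f n" unfolding Inv_def by auto
  let ?S = "{colless t | t. leaves t = n}"
  have fin: "finite ?S"
  proof (rule finite_subset)
    show "?S \<subseteq> {..n*n}" using colless_ub by fastforce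
  qed simp
  show ?thesis unfolding min_colless_def
  proof (rule Min_eqI[symmetric])
    show "finite ?S" by (rule fin)
    show "\<And>y. y \<in> ?S \<Longrightarrow> colless T \<le> y" using CT colless_lb by fastforce
    show "colless T \<in> ?S" using LT by blast
  qed
qed

end
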